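(* Let $p\in[1,+\infty)$, $s\in(0,1)$ and $\beta\in\big(\max\{0,\frac1p-2s\},\frac1p\big)$, and let $u(x):=(1+x^2)^{-\beta/2}$ for $x\in\mathbb{R}$. Then $u\notin L^p(\mathbb{R})$; there exists a constant $C>0$ such that $|(-\Delta)^su(x)|\le C|x|^{-\beta-2s}$ for all $|x|\ge1$; and $(-\Delta)^su\in L^p(\mathbb{R})$.
   Context: For a function $v$ on $\mathbb{R}^n$ ($n=1$ here), smooth near $x$ and with $\int\frac{|v(y)|}{(1+|y|)^{n+2s}}dy<\infty$, the fractional Laplacian is $(-\Delta)^sv(x):=c_{n,s}\lim_{\varepsilon\searrow0}\int_{\mathbb{R}^n\setminus B_\varepsilon(x)}\frac{v(x)-v(y)}{|x-y|^{n+2s}}dy$, with $c_{n,s}=-\frac{2^{2s}\Gamma(\frac{n+2s}2)}{\pi^{n/2}\Gamma(-s)}>0$. *)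

theory Defs
  imports "HOL-Analysis.Analysis"
begin

definition frac_const :: "real \<Rightarrow> real" where
  "frac_const s = - (2 powr (2 * s) * Gamma ((1 + 2 * s)/2)) / (sqrt pi * Gamma (-s))"

definition frac_trunc :: "real \<Rightarrow> (real \<Rightarrow> real) \<Rightarrow> real \<Rightarrow> real \<Rightarrow> real" where
  "frac_trunc s v x \<epsilon> =
     (LINT y:{y. \<epsilon> \<le> \<bar>x - y\<bar>}|lborel. (v x - v y) / \<bar>x - y\<bar> powr (1 + 2 * s))"

definition frac_lap :: "real \<Rightarrow> (real \<Rightarrow> real) \<Rightarrow> real \<Rightarrow> real" where
  "frac_lap s v x = frac_const s * Lim (at_right 0) (frac_trunc s v x)"

definition in_Lp :: "real \<Rightarrow> (real \<Rightarrow> real) \<Rightarrow> bool" where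
  "in_Lp p f \<longleftrightarrow> f \<in> borel_measurable lborel \<and> integrable lborel (\<lambda>x. \<bar>f x\<bar> powr p)"

end

theory Submission
  imports Defs
begin


lemma hk_to_lborel:
  fixes f :: "real \<Rightarrow> real"
  assumes "f integrable_on A" "\<And>x. x\<in>A \<Longrightarrow> 0 \<le> f x" "A \<in> sets borel"
    "f \<in> borel_measurable borel"
  shows "integrable lborel (\<lambda>x. indicator A x * f x)"
proof -
  have "f absolutely_integrable_on A"
    using assms(1,2) by (rule nonnegative_absolutely_integrable_1)
  then have "integrable lebesgue (\<lambda>x. indicator A x *\<^sub>R f x)"
    by (simp add: set_integrable_def)
  then have "integrable (completion lborel) (\<lambda>x. indicator A x * f x)" by simp
  moreover have "(\<lambda>x. indicator A x * f x) \<in> borel_measurable lborel"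
    using assms(3,4) by measurable
  ultimately show ?thesis by (simp add: integrable_completion)
qed

lemma intP:
  fixes a c :: real
  assumes "a > -1" "c \<ge> 0"
  shows "integrable lborel (\<lambda>t::real. indicator {-c..c} t * \<bar>t\<bar> powr a)"
proof -
  define g where "g = (\<lambda>x::real. indicator {0..c} x * x powr a)"
  have g: "integrable lborel g" unfolding g_def
    by (rule hk_to_lborel) (use integrable_on_powr_from_0[OF assms] in auto)
  then have g': "integrable lborel (\<lambda>x. g (0 + (-1) * x))"
    by (intro lborel_integrable_real_affine) auto
  have "integrable lborel (\<lambda>x. g x + g (0 + (-1) * x))"
    using g g' by auto
  then show ?thesis
  proof (rule Bochner_Integration.integrable_bound)
    show "(\<lambda>t::real. indicator {-c..c} t * \<bar>t\<bar> powr a) \<in> borel_measurable lborel" by measurable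
    show "AE x in lborel. norm (indicator {-c..c} x * \<bar>x\<bar> powr a) \<le> norm (g x + g (0 + (-1) * x))"
      by (auto simp: g_def indicator_def)
  qed
qed

lemma intQ:
  fixes a c :: real
  assumes "a < -1" "c > 0"
  shows "integrable lborel (\<lambda>t::real. indicator {t. c \<le> \<bar>t\<bar>} t * \<bar>t\<bar> powr a)"
proof -
  define g where "g = (\<lambda>x::real. indicator {c..} x * x powr a)"
  have "(\<lambda>x. x powr a) integrable_on {c..}"
    using has_integral_powr_to_inf[OF assms] unfolding integrable_on_def by blast
  then have g: "integrable lborel g" unfolding g_def
    by (rule hk_to_lborel) auto
  then have g': "integrable lborel (\<lambda>x. g (0 + (-1) * x))"
    by (intro lborel_integrable_real_affine) auto
  have "integrable lborel (\<lambda>x. g x + g (0 + (-1) * x))"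
    using g g' by auto
  then show ?thesis
  proof (rule Bochner_Integration.integrable_bound)
    show "(\<lambda>t::real. indicator {t. c \<le> \<bar>t\<bar>} t * \<bar>t\<bar> powr a) \<in> borel_measurable lborel" by measurable
    show "AE x in lborel. norm (indicator {t. c \<le> \<bar>t\<bar>} x * \<bar>x\<bar> powr a) \<le> norm (g x + g (0 + (-1) * x))"
      using assms by (auto simp: g_def indicator_def)
  qed
qed



definition P :: "real \<Rightarrow> real \<Rightarrow> real \<Rightarrow> real" where
  "P a c t = indicator {-c..c} t * \<bar>t\<bar> powr a"
definition Q :: "real \<Rightarrow> real \<Rightarrow> real \<Rightarrow> real" where
  "Q a c t = indicator {t. c \<le> \<bar>t\<bar>} t * \<bar>t\<bar> powr a"

lemma P_meas[measurable]: "P a c \<in> borel_measurable borel"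
  unfolding P_def[abs_def] by measurable
lemma Q_meas[measurable]: "Q a c \<in> borel_measurable borel"
  unfolding Q_def[abs_def] by measurable
lemma P_nonneg: "0 \<le> P a c t" unfolding P_def by (simp add: indicator_def)
lemma Q_nonneg: "0 \<le> Q a c t" unfolding Q_def by (simp add: indicator_def)

lemma intP': "a > -1 \<Longrightarrow> c \<ge> 0 \<Longrightarrow> integrable lborel (P a c)"
  unfolding P_def[abs_def] by (rule intP)
lemma intQ': "a < -1 \<Longrightarrow> c > 0 \<Longrightarrow> integrable lborel (Q a c)"
  unfolding Q_def[abs_def] by (rule intQ)

locale FL = fixes s \<beta> :: real assumes s0: "0<s" and s1: "s<1" and b0: "0<\<beta>" and b1: "\<beta><1"
begin
definition u where "u x = (1+x\<^sup>2) powr (-\<beta>/2)"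
definition u1 where "u1 x = -\<beta>*x*(1+x\<^sup>2) powr (-\<beta>/2-1)"
definition u2 where "u2 x = -\<beta>*(1+x\<^sup>2) powr (-\<beta>/2-1) + \<beta>*(\<beta>+2)*x\<^sup>2*(1+x\<^sup>2) powr (-\<beta>/2-2)"

lemma pw1: "(1+x\<^sup>2::real) powr (a-1) = (1+x\<^sup>2) powr a / (1+x\<^sup>2)"
proof -
  have "0 < 1+x\<^sup>2" by (simp add: add_pos_nonneg)
  then show ?thesis by (simp add: powr_diff)
qed

lemma u_deriv: "(u has_real_derivative u1 x) (at x)"
proof -
  have p: "0 < 1+x\<^sup>2" by (simp add: add_pos_nonneg)
  have "((\<lambda>x. (1+x\<^sup>2) powr (-\<beta>/2)) has_real_derivative u1 x) (at x)"
    using p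
    apply (auto intro!: derivative_eq_intros)
    apply (simp add: u1_def pw1[of x "-\<beta>/2"] field_simps)
    done
  then show ?thesis unfolding u_def[abs_def] .
qed

lemma u1_deriv: "(u1 has_real_derivative u2 x) (at x)"
proof -
  have p: "0 < 1+x\<^sup>2" by (simp add: add_pos_nonneg)
  have "((\<lambda>x. -\<beta>*x*(1+x\<^sup>2) powr (-\<beta>/2-1)) has_real_derivative u2 x) (at x)"
    using p
    apply (auto intro!: derivative_eq_intros)
    apply (simp add: u2_def pw1[of x "-\<beta>/2-1"] field_simps)
    apply (subgoal_tac "(- 4 - \<beta>) / 2 = (- \<beta> - 4) / 2")
     apply (simp only: power2_eq_square) apply simp
    done
  then show ?thesis unfolding u1_def[abs_def] .
qed


lemma onepos: "0 < 1 + (x::real)\<^sup>2" by (simp add: add_pos_nonneg)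

lemma u2_bound: "\<bar>u2 x\<bar> \<le> 4*(1+x\<^sup>2) powr (-\<beta>/2-1)"
proof -
  define P where "P = (1+x\<^sup>2) powr (-\<beta>/2-1)"
  define q where "q = x\<^sup>2/(1+x\<^sup>2)"
  have P: "P > 0" unfolding P_def using onepos[of x] by simp
  have q0: "0 \<le> q" and q1: "q \<le> 1" unfolding q_def using onepos[of x] by (auto simp: field_simps)
  have ee: "(-\<beta>/2-2) = (-\<beta>/2-1) - 1" by simp
  have e: "(1+x\<^sup>2) powr (-\<beta>/2-2) = P/(1+x\<^sup>2)"
    unfolding P_def ee by (rule pw1)
  have "u2 x = P*(-\<beta> + \<beta>*(\<beta>+2)*q)"
    unfolding u2_def e q_def P_def by (simp add: field_simps)
  moreover have "\<bar>-\<beta> + \<beta>*(\<beta>+2)*q\<bar> \<le> 4"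
  proof -
    have "\<beta>*(\<beta>+2) \<le> 1*3" using b0 b1 by (intro mult_mono) auto
    moreover have "\<beta>*(\<beta>+2)*q \<le> \<beta>*(\<beta>+2)" using q0 q1 b0 by (intro mult_left_le) auto
    moreover have "0 \<le> \<beta>*(\<beta>+2)*q" using q0 b0 by simp
    ultimately show ?thesis using b0 b1 by linarith
  qed
  ultimately show ?thesis using P unfolding P_def[symmetric] by (simp add: abs_mult)
qed

definition N where "N x h = 2*u x - u(x+h) - u(x-h)"

lemma N_pos: 
  assumes h: "h > 0"
  shows "\<exists>\<eta>. \<bar>\<eta>-x\<bar> \<le> \<bar>h\<bar> \<and> \<bar>N x h\<bar> \<le> 8*h\<^sup>2*(1+\<eta>\<^sup>2) powr (-\<beta>/2-1)"
proof -
  define g where "g t = u(x+t)+u(x-t)" for t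
  have "\<exists>z. 0 < z \<and> z < h \<and> g h - g 0 = (h - 0) * (u1 (x+z) - u1 (x-z))"
    unfolding g_def
    by (rule MVT2[OF h]) (auto intro!: derivative_eq_intros u_deriv[THEN DERIV_chain2])
  then obtain \<xi> where xi: "0 < \<xi>" "\<xi> < h" and e1: "g h - g 0 = h * (u1 (x+\<xi>) - u1 (x-\<xi>))" by auto
  have "x - \<xi> < x + \<xi>" using xi by simp
  from MVT2[OF this, of u1 u2] u1_deriv obtain \<eta> where eta: "x-\<xi> < \<eta>" "\<eta> < x+\<xi>"
     and e2: "u1 (x+\<xi>) - u1 (x-\<xi>) = (x+\<xi> - (x-\<xi>)) * u2 \<eta>" by blast
  have "N x h = -(h * (2*\<xi>) * u2 \<eta>)"
    using e1 e2 unfolding N_def g_def by simp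
  then have "\<bar>N x h\<bar> = h * (2*\<xi>) * \<bar>u2 \<eta>\<bar>" using xi by (simp add: abs_mult)
  also have "\<dots> \<le> h * (2*h) * (4*(1+\<eta>\<^sup>2) powr (-\<beta>/2-1))"
    using xi h u2_bound[of \<eta>] by (intro mult_mono) auto
  finally show ?thesis using eta xi h by (intro exI[of _ \<eta>]) (auto simp: power2_eq_square)
qed

lemma u_even: "u (-x) = u x" by (simp add: u_def)

lemma N_neg: "N x (-h) = N x h" unfolding N_def by simp

lemma N_bound: "\<exists>\<eta>. \<bar>\<eta>-x\<bar> \<le> \<bar>h\<bar> \<and> \<bar>N x h\<bar> \<le> 8*h\<^sup>2*(1+\<eta>\<^sup>2) powr (-\<beta>/2-1)"
proof -
  consider "h > 0" | "h = 0" | "h < 0" by linarith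
  then show ?thesis
  proof cases
    case 1 then show ?thesis by (rule N_pos)
  next
    case 2 then show ?thesis by (intro exI[of _ x]) (simp add: N_def)
  next
    case 3 then show ?thesis using N_pos[of "-h" x] by (simp add: N_neg)
  qed
qed

lemma u_pos: "0 < u x" unfolding u_def using onepos[of x] by simp
lemma u_le1: "u x \<le> 1" unfolding u_def using powr_mono2'[of "-\<beta>/2" 1 "1+x\<^sup>2"] b0 by simp

lemma sq_powr: "(y::real) \<noteq> 0 \<Longrightarrow> (y\<^sup>2) powr a = \<bar>y\<bar> powr (2*a)"
proof -
  assume y: "y \<noteq> 0"
  have "y\<^sup>2 = \<bar>y\<bar> powr 2" using y by (simp add: powr_realpow[of "\<bar>y\<bar>" 2, simplified])
  then have "(y\<^sup>2) powr a = (\<bar>y\<bar> powr 2) powr a" by (rule arg_cong)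
  also have "\<dots> = \<bar>y\<bar> powr (2*a)" by (rule powr_powr)
  finally show ?thesis .
qed

lemma u_le_pow: "y \<noteq> 0 \<Longrightarrow> u y \<le> \<bar>y\<bar> powr (-\<beta>)"
proof -
  assume y: "y \<noteq> 0"
  have "u y \<le> (y\<^sup>2) powr (-\<beta>/2)" unfolding u_def using y b0
    by (intro powr_mono2') auto
  also have "\<dots> = \<bar>y\<bar> powr (-\<beta>)" using sq_powr[OF y] by simp
  finally show ?thesis .
qed


lemma u_meas[measurable]: "u \<in> borel_measurable borel"
  unfolding u_def[abs_def] by measurable

definition G :: "real \<Rightarrow> real \<Rightarrow> real" where "G x h = N x h / \<bar>h\<bar> powr (1+2 * s)"

lemma G_meas[measurable]: "G x \<in> borel_measurable borel"
  unfolding G_def[abs_def] N_def by measurable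

lemma G_zero[simp]: "G x 0 = 0" unfolding G_def by simp

definition W where "W h = 8 * P (1-2 * s) 1 h + 2 * Q (-(1+2 * s)) 1 h"

lemma W_int: "integrable lborel W"
proof -
  have "integrable lborel (P (1-2 * s) 1)" using s1 by (intro intP') auto
  moreover have "integrable lborel (Q (-(1+2 * s)) 1)" using s0 by (intro intQ') auto
  ultimately show ?thesis unfolding W_def[abs_def] by auto
qed

lemma N_le2: "\<bar>N x h\<bar> \<le> 2"
  unfolding N_def using u_pos[of x] u_le1[of x] u_pos[of "x+h"] u_le1[of "x+h"]
    u_pos[of "x-h"] u_le1[of "x-h"] by linarith

lemma N_le_sq: "\<bar>N x h\<bar> \<le> 8*h\<^sup>2"
proof -
  obtain \<eta> where "\<bar>N x h\<bar> \<le> 8*h\<^sup>2*(1+\<eta>\<^sup>2) powr (-\<beta>/2-1)" using N_bound by blast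
  moreover have "(1+\<eta>\<^sup>2) powr (-\<beta>/2-1) \<le> 1"
    using powr_mono2'[of "-\<beta>/2-1" 1 "1+\<eta>\<^sup>2"] b0 by simp
  ultimately show ?thesis
    by (smt (verit) mult_left_le zero_le_power2)
qed

lemma div_powr: "c / (y::real) powr a = c * y powr (-a)" by (simp add: powr_minus divide_inverse)

lemma sq_div_powr: "(h::real) \<noteq> 0 \<Longrightarrow> h\<^sup>2 / \<bar>h\<bar> powr a = \<bar>h\<bar> powr (2 - a)"
proof -
  assume h: "h \<noteq> 0"
  have "h\<^sup>2 = \<bar>h\<bar> powr 2" using h by (simp add: powr_realpow[of "\<bar>h\<bar>" 2, simplified])
  then show ?thesis using h by (simp add: powr_diff)
qed

lemma G_le_W: "\<bar>G x h\<bar> \<le> W h"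
proof (cases "h = 0")
  case True then show ?thesis by (simp add: W_def P_nonneg Q_nonneg)
next
  case False
  then have hp: "\<bar>h\<bar> powr (1+2 * s) > 0" by simp
  have eq: "\<bar>G x h\<bar> = \<bar>N x h\<bar> / \<bar>h\<bar> powr (1+2 * s)" unfolding G_def by simp
  show ?thesis
  proof (cases "\<bar>h\<bar> \<le> 1")
    case True
    have "\<bar>G x h\<bar> \<le> 8*h\<^sup>2 / \<bar>h\<bar> powr (1+2 * s)"
      unfolding eq using hp N_le_sq[of x h] by (simp add: divide_right_mono)
    also have "\<dots> = 8 * \<bar>h\<bar> powr (1-2 * s)" using sq_div_powr[OF False, of "1+2 * s"] by simp
    also have "\<dots> = 8 * P (1-2 * s) 1 h" using True by (auto simp: P_def indicator_def)
    finally show ?thesis unfolding W_def using Q_nonneg[of "-(1+2 * s)" 1 h] by linarith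
  next
    case False
    have "\<bar>G x h\<bar> \<le> 2 / \<bar>h\<bar> powr (1+2 * s)"
      unfolding eq using hp N_le2[of x h] by (simp add: divide_right_mono)
    also have "\<dots> = 2 * \<bar>h\<bar> powr (-(1+2 * s))" by (rule div_powr)
    also have "\<dots> = 2 * Q (-(1+2 * s)) 1 h" using False by (simp add: Q_def)
    finally show ?thesis unfolding W_def using P_nonneg[of "1-2 * s" 1 h] by linarith
  qed
qed

lemma G_int: "integrable lborel (G x)"
  by (rule Bochner_Integration.integrable_bound[OF W_int]) 
     (auto intro!: AE_I2 order.trans[OF G_le_W])

lemma trunc_int:
  assumes e: "\<epsilon> > 0"
  shows "set_integrable lborel {y. \<epsilon> \<le> \<bar>x - y\<bar>} (\<lambda>y. (u x - u y) / \<bar>x - y\<bar> powr (1 + 2 * s))"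
proof -
  have "integrable lborel (\<lambda>y. Q (-(1+2 * s)) \<epsilon> (x + (-1) * y))"
    using intQ'[of "-(1+2 * s)" \<epsilon>] s0 e by (intro lborel_integrable_real_affine) auto
  then have "integrable lborel (\<lambda>y. 2 * Q (-(1+2 * s)) \<epsilon> (x + (-1) * y))" by simp
  then show ?thesis unfolding set_integrable_def
  proof (rule Bochner_Integration.integrable_bound)
    show "(\<lambda>y. indicator {y. \<epsilon> \<le> \<bar>x - y\<bar>} y *\<^sub>R ((u x - u y) / \<bar>x - y\<bar> powr (1 + 2 * s)))
       \<in> borel_measurable lborel" by measurable
    show "AE y in lborel. norm (indicator {y. \<epsilon> \<le> \<bar>x - y\<bar>} y *\<^sub>R ((u x - u y) / \<bar>x - y\<bar> powr (1 + 2 * s)))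
          \<le> norm (2 * Q (- (1 + 2 * s)) \<epsilon> (x + - 1 * y))"
    proof (rule AE_I2)
      fix y
      show "norm (indicator {y. \<epsilon> \<le> \<bar>x - y\<bar>} y *\<^sub>R ((u x - u y) / \<bar>x - y\<bar> powr (1 + 2 * s)))
          \<le> norm (2 * Q (- (1 + 2 * s)) \<epsilon> (x + - 1 * y))"
      proof (cases "\<epsilon> \<le> \<bar>x - y\<bar>")
        case True
        then have hp: "\<bar>x-y\<bar> powr (1+2 * s) > 0" using e by simp
        have "\<bar>u x - u y\<bar> \<le> 2" using u_pos[of x] u_le1[of x] u_pos[of y] u_le1[of y] by linarith
        then have "\<bar>u x - u y\<bar> / \<bar>x-y\<bar> powr (1+2 * s) \<le> 2 / \<bar>x-y\<bar> powr (1+2 * s)"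
          using hp by (simp add: divide_right_mono)
        also have "\<dots> = 2 * \<bar>x-y\<bar> powr (-(1+2 * s))" by (rule div_powr)
        finally show ?thesis using True by (simp add: Q_def abs_mult)
      next
        case False then show ?thesis by (simp add: Q_nonneg)
      qed
    qed
  qed
qed


lemma trunc_eq:
  assumes e: "\<epsilon> > 0"
  shows "frac_trunc s u x \<epsilon> = (\<integral>h. indicator {t. \<epsilon> \<le> \<bar>t\<bar>} h * G x h \<partial>lborel) / 2"
proof -
  define f where "f y = indicator {y. \<epsilon> \<le> \<bar>x-y\<bar>} y *\<^sub>R ((u x - u y)/\<bar>x-y\<bar> powr (1+2 * s))" for y
  have fi: "integrable lborel f" using trunc_int[OF e, of x] unfolding set_integrable_def f_def .
  have tr: "frac_trunc s u x \<epsilon> = (\<integral>y. f y \<partial>lborel)"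
    by (simp add: frac_trunc_def set_lebesgue_integral_def f_def)
  have e1: "(\<integral>y. f y \<partial>lborel) = (\<integral>y. f (x + 1*y) \<partial>lborel)"
    using lborel_integral_real_affine[of 1 f x] by simp
  have e2: "(\<integral>y. f y \<partial>lborel) = (\<integral>y. f (x + (-1)*y) \<partial>lborel)"
    using lborel_integral_real_affine[of "-1" f x] by simp
  have i1: "integrable lborel (\<lambda>y. f (x + 1*y))" by (rule lborel_integrable_real_affine[OF fi]) simp
  have i2: "integrable lborel (\<lambda>y. f (x + (-1)*y))" by (rule lborel_integrable_real_affine[OF fi]) simp
  have "2 * (\<integral>y. f y \<partial>lborel) = (\<integral>y. f (x + 1*y) + f (x + (-1)*y) \<partial>lborel)"
    using e1 e2 Bochner_Integration.integral_add[OF i1 i2] by simp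
  also have "(\<lambda>y. f (x + 1*y) + f (x + (-1)*y)) = (\<lambda>h. indicator {t. \<epsilon> \<le> \<bar>t\<bar>} h * G x h)"
  proof
    fix h
    show "f (x + 1*h) + f (x + (-1)*h) = indicator {t. \<epsilon> \<le> \<bar>t\<bar>} h * G x h"
      unfolding f_def G_def N_def
      by (simp add: indicator_def add_divide_distrib[symmetric] diff_divide_distrib[symmetric])
  qed
  finally show ?thesis using tr by simp
qed

lemma trunc_lim: "((frac_trunc s u x) \<longlongrightarrow> (\<integral>h. G x h \<partial>lborel) / 2) (at_right 0)"
proof (rule tendsto_at_right_sequentially[of 0 1])
  fix S :: "nat \<Rightarrow> real"
  assume S: "\<And>n. 0 < S n" "\<And>n. S n < 1" "decseq S" "S \<longlonglongrightarrow> 0"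
  have "(\<lambda>n. \<integral>h. indicator {t. S n \<le> \<bar>t\<bar>} h * G x h \<partial>lborel) \<longlonglongrightarrow> (\<integral>h. G x h \<partial>lborel)"
  proof (rule integral_dominated_convergence[where w=W])
    show "G x \<in> borel_measurable lborel" by simp
    show "(\<lambda>h. indicator {t. S n \<le> \<bar>t\<bar>} h * G x h) \<in> borel_measurable lborel" for n
      by measurable
    show "integrable lborel W" by (rule W_int)
    show "AE h in lborel. norm (indicator {t. S n \<le> \<bar>t\<bar>} h * G x h) \<le> W h" for n
    proof (rule AE_I2)
      fix h
      have "norm (indicator {t. S n \<le> \<bar>t\<bar>} h * G x h) \<le> \<bar>G x h\<bar>"
        by (simp add: indicator_def)
      then show "norm (indicator {t. S n \<le> \<bar>t\<bar>} h * G x h) \<le> W h" using G_le_W[of x h] by linarith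
    qed
    show "AE h in lborel. (\<lambda>n. indicator {t. S n \<le> \<bar>t\<bar>} h * G x h) \<longlonglongrightarrow> G x h"
    proof (rule AE_I2)
      fix h :: real
      show "(\<lambda>n. indicator {t. S n \<le> \<bar>t\<bar>} h * G x h) \<longlonglongrightarrow> G x h"
      proof (cases "h = 0")
        case True then show ?thesis by simp
      next
        case False
        then have "\<bar>h\<bar> > 0" by simp
        from order_tendstoD(2)[OF S(4) this]
        have "eventually (\<lambda>n. indicator {t. S n \<le> \<bar>t\<bar>} h * G x h = G x h) sequentially"
          by eventually_elim (simp add: indicator_def)
        then show ?thesis by (rule tendsto_eventually)
      qed
    qed
  qed
  then have "(\<lambda>n. (\<integral>h. indicator {t. S n \<le> \<bar>t\<bar>} h * G x h \<partial>lborel) / 2) \<longlonglongrightarrow> (\<integral>h. G x h \<partial>lborel) / 2"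
    by (intro tendsto_divide tendsto_const) auto 
  then show "(\<lambda>n. frac_trunc s u x (S n)) \<longlonglongrightarrow> (\<integral>h. G x h \<partial>lborel) / 2"
  proof -
    have "(\<lambda>n. frac_trunc s u x (S n)) = (\<lambda>n. (\<integral>h. indicator {t. S n \<le> \<bar>t\<bar>} h * G x h \<partial>lborel) / 2)"
      using trunc_eq[OF S(1)] by (intro ext) blast
    with \<open>(\<lambda>n. (\<integral>h. indicator {t. S n \<le> \<bar>t\<bar>} h * G x h \<partial>lborel) / 2) \<longlonglongrightarrow> _\<close> show ?thesis by simp
  qed
qed simp

lemma frac_lap_eq: "frac_lap s u x = frac_const s * ((\<integral>h. G x h \<partial>lborel) / 2)"
  unfolding frac_lap_def using tendsto_Lim[OF _ trunc_lim[of x]] by simp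


end

context FL begin

definition Phi where "Phi t = 64 * P (1-2 * s) (1/2) t + 4 * Q (-(1+2 * s)) (1/2) t
   + 8 * P (-\<beta>) 1 (1 + (-1)*t) + 8 * P (-\<beta>) 1 (1 + 1*t)"

lemma Phi_nonneg: "0 \<le> Phi t"
  unfolding Phi_def by (intro add_nonneg_nonneg mult_nonneg_nonneg P_nonneg Q_nonneg) auto

lemma Phi_int: "integrable lborel Phi"
proof -
  have i1: "integrable lborel (P (1-2 * s) (1/2))" using s1 by (intro intP') auto
  have i2: "integrable lborel (Q (-(1+2 * s)) (1/2))" using s0 by (intro intQ') auto
  have i3: "integrable lborel (P (-\<beta>) 1)" using b1 by (intro intP') auto
  have i4: "integrable lborel (\<lambda>t. P (-\<beta>) 1 (1 + (-1)*t))" by (rule lborel_integrable_real_affine[OF i3]) simp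
  have i5: "integrable lborel (\<lambda>t. P (-\<beta>) 1 (1 + 1*t))" by (rule lborel_integrable_real_affine[OF i3]) simp
  show ?thesis unfolding Phi_def[abs_def] using i1 i2 i4 i5 by auto
qed

lemma div_powr2: "(x::real) > 0 \<Longrightarrow> y > 0 \<Longrightarrow> (x/y) powr a = x powr a * y powr (-a)" 
  by (simp add: powr_divide powr_minus_divide)
lemma frac4: "((c::real)*a*b)/(d*e) = c*(a/e)*(b/d)" by (simp add: divide_inverse mult_ac)
lemma frac5: "((a::real)*k)/(d*e) = (a/d)*(k*(1/e))" by (simp add: divide_inverse mult_ac)

lemma half_powr: "(1/2::real) powr (-a) = 2 powr a" by (simp add: powr_minus powr_divide)

lemma Hw:
  assumes t: "\<bar>t\<bar> \<ge> 1/2" and w: "w \<noteq> 0"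
  shows "\<bar>w\<bar> powr (-\<beta>) * \<bar>t\<bar> powr (-(1+2 * s)) \<le> 8 * P (-\<beta>) 1 w + Q (-(1+2 * s)) (1/2) t"
proof (cases "\<bar>w\<bar> \<le> 1")
  case True
  have "\<bar>t\<bar> powr (-(1+2 * s)) \<le> (1/2) powr (-(1+2 * s))"
    using t s0 by (intro powr_mono2') auto
  also have "\<dots> = 2 powr (1+2 * s)" by (rule half_powr)
  also have "\<dots> \<le> 2 powr 3" using s1 by (intro powr_mono) auto
  also have "\<dots> = 8" by simp
  finally have "\<bar>w\<bar> powr (-\<beta>) * \<bar>t\<bar> powr (-(1+2 * s)) \<le> \<bar>w\<bar> powr (-\<beta>) * 8"
    by (intro mult_left_mono) auto
  moreover have "P (-\<beta>) 1 w = \<bar>w\<bar> powr (-\<beta>)" using True by (auto simp: P_def indicator_def)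
  ultimately show ?thesis using Q_nonneg[of "-(1+2 * s)" "1/2" t] by linarith
next
  case False
  have "\<bar>w\<bar> powr (-\<beta>) \<le> 1 powr (-\<beta>)" using False b0 by (intro powr_mono2') auto
  then have "\<bar>w\<bar> powr (-\<beta>) * \<bar>t\<bar> powr (-(1+2 * s)) \<le> 1 * \<bar>t\<bar> powr (-(1+2 * s))"
    by (intro mult_right_mono) auto
  moreover have "Q (-(1+2 * s)) (1/2) t = \<bar>t\<bar> powr (-(1+2 * s))" using t by (auto simp: Q_def indicator_def)
  ultimately show ?thesis using P_nonneg[of "-\<beta>" 1 w] by simp
qed

lemma pw_split: "(r::real) > 0 \<Longrightarrow> t \<noteq> 0 \<Longrightarrow> \<bar>r*t\<bar> powr a = r powr a * \<bar>t\<bar> powr a"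
  by (simp add: abs_mult powr_mult)

lemma pw_split2: "(r::real) > 0 \<Longrightarrow> \<bar>r*w\<bar> powr a = r powr a * \<bar>w\<bar> powr a"
  by (simp add: abs_mult powr_mult)

lemma G_scaled:
  assumes r: "\<bar>x\<bar> \<ge> 1" and t1: "t \<noteq> 1" and t2: "t \<noteq> -1"
  shows "\<bar>G x (\<bar>x\<bar>*t)\<bar> \<le> \<bar>x\<bar> powr (-\<beta>-(1+2 * s)) * Phi t"
proof -
  define r where "r = \<bar>x\<bar>"
  define \<sigma> where "\<sigma> = 1+2 * s"
  have r0: "r > 0" "r \<ge> 1" using r unfolding r_def by auto
  show ?thesis
  proof (cases "t = 0")
    case True then show ?thesis using Phi_nonneg[of t] by simp
  next
    case t0: False
    have Gabs: "\<bar>G x (r*t)\<bar> = \<bar>N x (r*t)\<bar> / (r powr \<sigma> * \<bar>t\<bar> powr \<sigma>)"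
      unfolding G_def \<sigma>_def using pw_split[OF r0(1) t0] by simp
    have den: "r powr \<sigma> * \<bar>t\<bar> powr \<sigma> > 0" using r0 t0 by simp
    show ?thesis
    proof (cases "\<bar>t\<bar> \<le> 1/2")
      case True
      obtain \<eta> where eta: "\<bar>\<eta>-x\<bar> \<le> \<bar>r*t\<bar>" and Nb: "\<bar>N x (r*t)\<bar> \<le> 8*(r*t)\<^sup>2*(1+\<eta>\<^sup>2) powr (-\<beta>/2-1)"
        using N_bound by blast
      have "\<bar>r*t\<bar> \<le> r/2" using True r0 by (simp add: abs_mult mult_left_mono[of _ "1/2"]) 
      then have etab: "\<bar>\<eta>\<bar> \<ge> r/2" using eta unfolding r_def by linarith
      have "(1+\<eta>\<^sup>2) powr (-\<beta>/2-1) \<le> ((r/2)\<^sup>2) powr (-\<beta>/2-1)"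
      proof (rule powr_mono2')
        show "-\<beta>/2-1 \<le> 0" using b0 by simp
        show "0 < (r/2)\<^sup>2" using r0 by simp
        have "(r/2)\<^sup>2 \<le> \<eta>\<^sup>2" using etab r0 by (simp add: abs_le_square_iff[symmetric])
        then show "(r/2)\<^sup>2 \<le> 1+\<eta>\<^sup>2" by simp
      qed
      also have "\<dots> = (r/2) powr (-\<beta>-2)" using sq_powr[of "r/2" "-\<beta>/2-1"] r0 by simp
      also have "\<dots> = r powr (-\<beta>-2) * 2 powr (-(-\<beta>-2))"
        using r0 by (intro div_powr2) auto
      also have "\<dots> = r powr (-\<beta>-2) * 2 powr (\<beta>+2)" by (simp add: add.commute)
      also have "\<dots> \<le> r powr (-\<beta>-2) * 8"
      proof -
        have "2 powr (\<beta>+2) \<le> 2 powr 3" using b1 by (intro powr_mono) auto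
        then show ?thesis by (intro mult_left_mono) auto
      qed
      finally have pb: "(1+\<eta>\<^sup>2) powr (-\<beta>/2-1) \<le> r powr (-\<beta>-2) * 8" .
      have "\<bar>N x (r*t)\<bar> \<le> 8*(r*t)\<^sup>2*(r powr (-\<beta>-2) * 8)"
        using Nb pb by (smt (verit) mult_left_mono zero_le_power2)
      also have "\<dots> = 64 * t\<^sup>2 * (r\<^sup>2 * r powr (-\<beta>-2))" by (simp add: power_mult_distrib)
      also have "r\<^sup>2 * r powr (-\<beta>-2) = r powr (-\<beta>)"
      proof -
        have "r\<^sup>2 = r powr 2" using r0 by (simp add: powr_realpow[of r 2, simplified])
        then have "r\<^sup>2 * r powr (-\<beta>-2) = r powr 2 * r powr (-\<beta>-2)" by simp
        also have "\<dots> = r powr (2 + (-\<beta>-2))" by (rule powr_add[symmetric])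
        also have "\<dots> = r powr (-\<beta>)" by simp
        finally show ?thesis .
      qed
      finally have Nb2: "\<bar>N x (r*t)\<bar> \<le> 64 * t\<^sup>2 * r powr (-\<beta>)" .
      have "\<bar>G x (r*t)\<bar> \<le> 64 * t\<^sup>2 * r powr (-\<beta>) / (r powr \<sigma> * \<bar>t\<bar> powr \<sigma>)"
        unfolding Gabs using Nb2 den by (simp add: divide_right_mono)
      also have "\<dots> = 64 * (t\<^sup>2 / \<bar>t\<bar> powr \<sigma>) * (r powr (-\<beta>) / r powr \<sigma>)"
        by (rule frac4)
      also have "\<dots> = 64 * \<bar>t\<bar> powr (1-2 * s) * r powr (-\<beta>-\<sigma>)"
        using sq_div_powr[OF t0, of \<sigma>] r0 by (simp add: powr_diff \<sigma>_def)
      also have "\<dots> = r powr (-\<beta>-\<sigma>) * (64 * P (1-2 * s) (1/2) t)"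
      proof -
        have "t \<in> {-(1/2)..1/2}" using True by auto
        then show ?thesis by (simp add: P_def)
      qed
      also have "\<dots> \<le> r powr (-\<beta>-\<sigma>) * Phi t"
        by (intro mult_left_mono) (auto simp: Phi_def intro!: add_nonneg_nonneg P_nonneg Q_nonneg)
      finally show ?thesis unfolding r_def \<sigma>_def .
    next
      case False
      have x0: "x \<noteq> 0" using r by auto
      have a1: "1 + t \<noteq> 0" "1 - t \<noteq> 0" using t1 t2 by auto
      have sum: "u (x + r*t) + u (x - r*t) \<le> r powr (-\<beta>) * (\<bar>1+t\<bar> powr (-\<beta>) + \<bar>1-t\<bar> powr (-\<beta>))"
      proof -
        have nz1: "r*(1+t) \<noteq> 0" "r*(1-t) \<noteq> 0" using a1 r0 by auto
        have ul: "u z \<le> \<bar>w\<bar> powr (-\<beta>)" if "\<bar>z\<bar> = \<bar>w\<bar>" "w \<noteq> 0" for z w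
        proof -
          have "z \<noteq> 0" using that by auto
          then show ?thesis using u_le_pow[of z] that by simp
        qed
        have "(\<bar>x + r*t\<bar> = \<bar>r*(1+t)\<bar> \<and> \<bar>x - r*t\<bar> = \<bar>r*(1-t)\<bar>) \<or>
              (\<bar>x + r*t\<bar> = \<bar>r*(1-t)\<bar> \<and> \<bar>x - r*t\<bar> = \<bar>r*(1+t)\<bar>)"
        proof (cases "x \<ge> 0")
          case True
          then have xr: "x = r" unfolding r_def by simp
          then show ?thesis by (simp add: algebra_simps)
        next
          case False
          then have xr: "x = -r" unfolding r_def by simp
          have "\<bar>x + r*t\<bar> = \<bar>r*(1-t)\<bar>"
          proof -
            have "x + r*t = -(r*(1-t))" using xr by (simp add: algebra_simps)
            then show ?thesis by simp
          qed
          moreover have "\<bar>x - r*t\<bar> = \<bar>r*(1+t)\<bar>"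
          proof -
            have "x - r*t = -(r*(1+t))" using xr by (simp add: algebra_simps)
            then show ?thesis by simp
          qed
          ultimately show ?thesis by simp
        qed
        then have "u (x + r*t) + u (x - r*t) \<le> \<bar>r*(1+t)\<bar> powr (-\<beta>) + \<bar>r*(1-t)\<bar> powr (-\<beta>)"
          using ul[OF _ nz1(1)] ul[OF _ nz1(2)] by (smt (verit))
        also have "\<dots> = r powr (-\<beta>) * (\<bar>1+t\<bar> powr (-\<beta>) + \<bar>1-t\<bar> powr (-\<beta>))"
          unfolding pw_split2[OF r0(1)] by (simp add: distrib_left)
        finally show ?thesis .
      qed
      have ux: "u x \<le> r powr (-\<beta>)" using u_le_pow[OF x0] unfolding r_def .
      have Nb: "\<bar>N x (r*t)\<bar> \<le> r powr (-\<beta>) * (2 + \<bar>1+t\<bar> powr (-\<beta>) + \<bar>1-t\<bar> powr (-\<beta>))"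
        using sum ux u_pos[of x] u_pos[of "x+r*t"] u_pos[of "x-r*t"] unfolding N_def
        by (simp add: distrib_left)
      have tb: "\<bar>t\<bar> \<ge> 1/2" using False by simp
      have "\<bar>G x (r*t)\<bar> \<le> r powr (-\<beta>) * (2 + \<bar>1+t\<bar> powr (-\<beta>) + \<bar>1-t\<bar> powr (-\<beta>)) / (r powr \<sigma> * \<bar>t\<bar> powr \<sigma>)"
        unfolding Gabs using Nb den by (simp add: divide_right_mono)
      also have "\<dots> = (r powr (-\<beta>) / r powr \<sigma>) * ((2 + \<bar>1+t\<bar> powr (-\<beta>) + \<bar>1-t\<bar> powr (-\<beta>)) * \<bar>t\<bar> powr (-\<sigma>))"
        unfolding frac5 powr_minus_divide by simp
      also have "\<dots> = r powr (-\<beta>-\<sigma>) * (2 * \<bar>t\<bar> powr (-\<sigma>) + \<bar>1+t\<bar> powr (-\<beta>) * \<bar>t\<bar> powr (-\<sigma>) + \<bar>1-t\<bar> powr (-\<beta>) * \<bar>t\<bar> powr (-\<sigma>))"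
        using r0 by (simp add: powr_diff distrib_right)
      also have "\<dots> \<le> r powr (-\<beta>-\<sigma>) * Phi t"
      proof (intro mult_left_mono)
        have q: "Q (-(1+2 * s)) (1/2) t = \<bar>t\<bar> powr (-\<sigma>)" using tb by (auto simp: Q_def indicator_def \<sigma>_def)
        have h1: "\<bar>1+t\<bar> powr (-\<beta>) * \<bar>t\<bar> powr (-\<sigma>) \<le> 8 * P (-\<beta>) 1 (1 + 1*t) + Q (-(1+2 * s)) (1/2) t"
          using Hw[OF tb, of "1+t"] a1 unfolding \<sigma>_def by simp
        have h2: "\<bar>1-t\<bar> powr (-\<beta>) * \<bar>t\<bar> powr (-\<sigma>) \<le> 8 * P (-\<beta>) 1 (1 + (-1)*t) + Q (-(1+2 * s)) (1/2) t"
          using Hw[OF tb, of "1-t"] a1 unfolding \<sigma>_def by simp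
        show "2 * \<bar>t\<bar> powr (-\<sigma>) + \<bar>1+t\<bar> powr (-\<beta>) * \<bar>t\<bar> powr (-\<sigma>) + \<bar>1-t\<bar> powr (-\<beta>) * \<bar>t\<bar> powr (-\<sigma>) \<le> Phi t"
          using h1 h2 q P_nonneg[of "1-2 * s" "1/2" t] unfolding Phi_def by linarith
      qed simp
      finally show ?thesis unfolding r_def \<sigma>_def .
    qed
  qed
qed



lemma decay:
  assumes x: "\<bar>x\<bar> \<ge> 1"
  shows "\<bar>\<integral>h. G x h \<partial>lborel\<bar> \<le> (\<integral>t. Phi t \<partial>lborel) * \<bar>x\<bar> powr (-\<beta> - 2 * s)"
proof -
  define r where "r = \<bar>x\<bar>"
  have r0: "r > 0" "r \<noteq> 0" using x by (auto simp: r_def)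
  have e: "(\<integral>h. G x h \<partial>lborel) = \<bar>r\<bar> *\<^sub>R (\<integral>t. G x (0 + r*t) \<partial>lborel)"
    by (rule lborel_integral_real_affine[OF r0(2)])
  have gi: "integrable lborel (\<lambda>t. G x (0 + r*t))"
    by (rule lborel_integrable_real_affine[OF G_int r0(2)])
  have pi: "integrable lborel (\<lambda>t. r powr (-\<beta>-(1+2 * s)) * Phi t)" using Phi_int by simp
  have "\<bar>\<integral>t. G x (0 + r*t) \<partial>lborel\<bar> \<le> (\<integral>t. \<bar>G x (0 + r*t)\<bar> \<partial>lborel)"
    by (rule integral_abs_bound_integral[OF gi]) (use gi in auto)
  also have "\<dots> \<le> (\<integral>t. r powr (-\<beta>-(1+2 * s)) * Phi t \<partial>lborel)"
  proof (rule integral_mono_AE[OF _ pi])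
    show "integrable lborel (\<lambda>t. \<bar>G x (0 + r*t)\<bar>)" using gi by auto
    show "AE t in lborel. \<bar>G x (0 + r * t)\<bar> \<le> r powr (- \<beta> - (1 + 2 * s)) * Phi t"
      using AE_lborel_singleton[of 1] AE_lborel_singleton[of "-1"]
    proof eventually_elim
      case (elim t)
      then show ?case using G_scaled[OF x, of t] unfolding r_def by simp
    qed
  qed
  also have "\<dots> = r powr (-\<beta>-(1+2 * s)) * (\<integral>t. Phi t \<partial>lborel)" by simp
  finally have b: "\<bar>\<integral>t. G x (0 + r*t) \<partial>lborel\<bar> \<le> r powr (-\<beta>-(1+2 * s)) * (\<integral>t. Phi t \<partial>lborel)" .
  have "\<bar>\<integral>h. G x h \<partial>lborel\<bar> = r * \<bar>\<integral>t. G x (0 + r*t) \<partial>lborel\<bar>"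
    unfolding e using r0 by (simp add: abs_mult)
  also have "\<dots> \<le> r * (r powr (-\<beta>-(1+2 * s)) * (\<integral>t. Phi t \<partial>lborel))"
    using b r0 by (intro mult_left_mono) auto
  also have "r * (r powr (-\<beta>-(1+2 * s)) * (\<integral>t. Phi t \<partial>lborel)) = (r * r powr (-\<beta>-(1+2 * s))) * (\<integral>t. Phi t \<partial>lborel)"
    by (simp only: mult.assoc)
  also have "r * r powr (-\<beta>-(1+2 * s)) = r powr (-\<beta> - 2 * s)"
  proof -
    have "r * r powr (-\<beta>-(1+2 * s)) = r powr 1 * r powr (-\<beta>-(1+2 * s))" using r0 by simp
    also have "\<dots> = r powr (1 + (-\<beta>-(1+2 * s)))" by (rule powr_add[symmetric])
    also have "1 + (-\<beta>-(1+2 * s)) = -\<beta> - 2 * s" by simp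
    finally show ?thesis .
  qed
  finally show ?thesis unfolding r_def by (simp add: mult_ac)
qed

lemma G_pair_meas[measurable]: "(\<lambda>(x,h). G x h) \<in> borel_measurable (lborel \<Otimes>\<^sub>M lborel)"
  unfolding G_def N_def by measurable

lemma IG_meas: "(\<lambda>x. \<integral>h. G x h \<partial>lborel) \<in> borel_measurable lborel"
  by measurable


lemma not_Lp:
  assumes p: "1 \<le> p" and bp: "\<beta> < 1/p"
  shows "\<not> in_Lp p u"
proof
  assume "in_Lp p u"
  then have ui: "integrable lborel (\<lambda>x. \<bar>u x\<bar> powr p)" unfolding in_Lp_def by blast
  define k where "k = 2 powr (-\<beta>*p/2)"
  have k0: "k > 0" unfolding k_def by simp
  have bp1: "\<beta>*p < 1" using bp p by (simp add: field_simps)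
  define M where "M = (\<integral>x. \<bar>u x\<bar> powr p \<partial>lborel) / k"
  have bnd: "ln b \<le> M" if b: "b \<ge> 1" for b
  proof -
    have fi: "integrable lborel (\<lambda>x. (1/x) * indicator {1..b} x)"
      by (rule borel_integrable_atLeastAtMost) auto
    have "(\<integral>x. indicator {1..b} x *\<^sub>R (1/x) \<partial>lborel) = ln b - ln 1"
    proof (rule integral_FTC_atLeastAtMost[OF b])
      fix x :: real assume "1 \<le> x" "x \<le> b"
      then show "(ln has_vector_derivative 1/x) (at x within {1..b})"
        by (auto intro!: derivative_eq_intros simp flip: has_real_derivative_iff_has_vector_derivative)
    next
      show "continuous_on {1..b} (\<lambda>x::real. 1/x)" by (intro continuous_intros) auto
    qed
    then have "ln b = (\<integral>x. (1/x) * indicator {1..b} x \<partial>lborel)" by (simp add: mult.commute)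
    also have "\<dots> \<le> (\<integral>x. \<bar>u x\<bar> powr p / k \<partial>lborel)"
    proof (rule integral_mono[OF fi])
      show "integrable lborel (\<lambda>x. \<bar>u x\<bar> powr p / k)" using ui by simp
      fix x :: real
      show "1 / x * indicator {1..b} x \<le> \<bar>u x\<bar> powr p / k"
      proof (cases "x \<in> {1..b}")
        case True
        then have x1: "x \<ge> 1" by simp
        have "x powr (-1) \<le> x powr (-\<beta>*p)"
          using x1 bp1 by (intro powr_mono) auto
        then have "k * x powr (-1) \<le> k * x powr (-\<beta>*p)" using k0 by (intro mult_left_mono) auto
        also have "k * x powr (-\<beta>*p) = (2*x\<^sup>2) powr (-\<beta>/2*p)"
        proof -
          have "(2*x\<^sup>2) powr (-\<beta>/2*p) = 2 powr (-\<beta>/2*p) * (x\<^sup>2) powr (-\<beta>/2*p)"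
            by (simp add: powr_mult)
          also have "(x\<^sup>2) powr (-\<beta>/2*p) = \<bar>x\<bar> powr (2*(-\<beta>/2*p))" using x1 by (intro sq_powr) auto
          finally show ?thesis using x1 by (simp add: k_def)
        qed
        also have "\<dots> \<le> (1+x\<^sup>2) powr (-\<beta>/2*p)"
        proof (rule powr_mono2')
          show "-\<beta>/2*p \<le> 0" using b0 p by simp
          show "0 < 1+x\<^sup>2" by (rule onepos)
          have "1 \<le> x\<^sup>2" using x1 by (simp add: one_le_power)
          then show "1 + x\<^sup>2 \<le> 2*x\<^sup>2" by simp
        qed
        also have "\<dots> = \<bar>u x\<bar> powr p"
          using u_pos[of x] by (simp add: u_def powr_powr)
        finally have "k * x powr (-1) \<le> \<bar>u x\<bar> powr p" .
        then have "x powr (-1) \<le> \<bar>u x\<bar> powr p / k" using k0 by (simp add: field_simps)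
        then show ?thesis using True x1 by (simp add: powr_minus divide_inverse)
      next
        case False
        then show ?thesis using k0 by simp
      qed
    qed
    also have "\<dots> = M" unfolding M_def by simp
    finally show ?thesis .
  qed
  have "ln (exp (\<bar>M\<bar>+1)) \<le> M" by (rule bnd) simp
  then show False by simp
qed

lemma main:
  assumes p: "1 \<le> p" and bl: "max 0 (1/p - 2 * s) < \<beta>" and bp: "\<beta> < 1/p"
  shows "\<not> in_Lp p u
    \<and> (\<forall>x. \<forall>\<epsilon>>0. set_integrable lborel {y. \<epsilon> \<le> \<bar>x - y\<bar>}
            (\<lambda>y. (u x - u y) / \<bar>x - y\<bar> powr (1 + 2 * s)))
    \<and> (\<forall>x. \<exists>L. (frac_trunc s u x \<longlongrightarrow> L) (at_right 0))
    \<and> (\<exists>C>0. \<forall>x. 1 \<le> \<bar>x\<bar> \<longrightarrow> \<bar>frac_lap s u x\<bar> \<le> C * \<bar>x\<bar> powr (-\<beta> - 2 * s))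
    \<and> in_Lp p (frac_lap s u)"
proof (intro conjI allI impI)
  show "\<not> in_Lp p u" using not_Lp[OF p bp] .
  show "set_integrable lborel {y. \<epsilon> \<le> \<bar>x - y\<bar>} (\<lambda>y. (u x - u y) / \<bar>x - y\<bar> powr (1 + 2 * s))"
    if "\<epsilon> > 0" for x \<epsilon> using trunc_int[OF that] .
  show "\<exists>L. (frac_trunc s u x \<longlongrightarrow> L) (at_right 0)" for x using trunc_lim by blast
  define C where "C = \<bar>frac_const s\<bar> * (\<integral>t. Phi t \<partial>lborel) / 2 + 1"
  have IP: "(\<integral>t. Phi t \<partial>lborel) \<ge> 0" using Phi_nonneg by simp
  have C0: "C > 0"
  proof -
    have "0 \<le> \<bar>frac_const s\<bar> * (\<integral>t. Phi t \<partial>lborel) / 2" using IP by simp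
    then show ?thesis unfolding C_def by linarith
  qed
  have Cb: "\<bar>frac_lap s u x\<bar> \<le> C * \<bar>x\<bar> powr (-\<beta> - 2 * s)" if x: "1 \<le> \<bar>x\<bar>" for x
  proof -
    have "\<bar>frac_lap s u x\<bar> = \<bar>frac_const s\<bar> * \<bar>\<integral>h. G x h \<partial>lborel\<bar> / 2"
      unfolding frac_lap_eq by (simp add: abs_mult)
    also have "\<dots> \<le> \<bar>frac_const s\<bar> * ((\<integral>t. Phi t \<partial>lborel) * \<bar>x\<bar> powr (-\<beta> - 2 * s)) / 2"
      using decay[OF x] by (intro divide_right_mono mult_left_mono) auto
    also have "\<dots> \<le> C * \<bar>x\<bar> powr (-\<beta> - 2 * s)"
      unfolding C_def by (simp add: field_simps)
    finally show ?thesis .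
  qed
  show "\<exists>C>0. \<forall>x. 1 \<le> \<bar>x\<bar> \<longrightarrow> \<bar>frac_lap s u x\<bar> \<le> C * \<bar>x\<bar> powr (-\<beta> - 2 * s)"
    using C0 Cb by blast
  have fl: "frac_lap s u = (\<lambda>x. frac_const s * ((\<integral>h. G x h \<partial>lborel) / 2))"
    using frac_lap_eq by (intro ext) 
  have flm: "frac_lap s u \<in> borel_measurable lborel"
    unfolding fl using IG_meas by measurable
  define B0 where "B0 = \<bar>frac_const s\<bar> * (\<integral>t. W t \<partial>lborel) / 2"
  have B0b: "\<bar>frac_lap s u x\<bar> \<le> B0" for x
  proof -
    have "\<bar>\<integral>h. G x h \<partial>lborel\<bar> \<le> (\<integral>t. W t \<partial>lborel)"
      by (rule integral_abs_bound_integral[OF G_int W_int]) (rule G_le_W)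
    then show ?thesis unfolding frac_lap_eq B0_def by (simp add: abs_mult divide_right_mono mult_left_mono)
  qed
  have p0: "p > 0" using p by simp
  define a where "a = -(\<beta> + 2 * s) * p"
  have a1: "a < -1"
  proof -
    have "1/p < \<beta> + 2 * s" using bl by simp
    then have "1 < (\<beta> + 2 * s) * p" using p0 by (simp add: field_simps)
    then show ?thesis unfolding a_def by (simp only: mult_minus_left)
  qed
  have dom: "integrable lborel (\<lambda>x. B0 powr p * (1 * indicator {-1..1} x) + C powr p * Q a 1 x)"
  proof -
    have "integrable lborel (\<lambda>x::real. (1::real) * indicator {-1..1} x)"
      using borel_integrable_atLeastAtMost[of "-1" 1 "\<lambda>_. 1::real"] by simp
    moreover have "integrable lborel (Q a 1)" using a1 by (intro intQ') auto
    ultimately show ?thesis by auto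
  qed
  show "in_Lp p (frac_lap s u)"
    unfolding in_Lp_def
  proof (intro conjI flm)
    show "integrable lborel (\<lambda>x. \<bar>frac_lap s u x\<bar> powr p)"
    proof (rule Bochner_Integration.integrable_bound[OF dom])
      show "(\<lambda>x. \<bar>frac_lap s u x\<bar> powr p) \<in> borel_measurable lborel" using flm by measurable
      show "AE x in lborel. norm (\<bar>frac_lap s u x\<bar> powr p) \<le> norm (B0 powr p * (1 * indicator {-1..1} x) + C powr p * Q a 1 x)"
      proof (rule AE_I2)
        fix x :: real
        have nn: "0 \<le> B0 powr p * (1 * indicator {-1..1} x) + C powr p * Q a 1 x"
          using Q_nonneg[of a 1 x] by (simp add: indicator_def)
        have "\<bar>frac_lap s u x\<bar> powr p \<le> B0 powr p * (1 * indicator {-1..1} x) + C powr p * Q a 1 x"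
        proof (cases "\<bar>x\<bar> \<le> 1")
          case True
          have "\<bar>frac_lap s u x\<bar> powr p \<le> B0 powr p" using B0b[of x] p0 by (intro powr_mono2) auto
          moreover have "indicator {-1..1} x = (1::real)" using True by (simp add: indicator_def abs_le_iff)
          moreover have "0 \<le> C powr p * Q a 1 x" by (simp add: Q_nonneg)
          ultimately show ?thesis by simp
        next
          case False
          then have x1: "1 \<le> \<bar>x\<bar>" by simp
          have "\<bar>frac_lap s u x\<bar> powr p \<le> (C * \<bar>x\<bar> powr (-\<beta> - 2 * s)) powr p"
            using Cb[OF x1] p0 by (intro powr_mono2) auto
          also have "\<dots> = C powr p * \<bar>x\<bar> powr a"
            using C0 by (simp add: powr_mult powr_powr a_def mult_ac)
          also have "\<bar>x\<bar> powr a = Q a 1 x" using x1 by (simp add: Q_def)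
          finally have "\<bar>frac_lap s u x\<bar> powr p \<le> C powr p * Q a 1 x" .
          moreover have "0 \<le> B0 powr p * (1 * indicator {-1..1} x)" by simp
          ultimately show ?thesis by linarith
        qed
        then show "norm (\<bar>frac_lap s u x\<bar> powr p) \<le> norm (B0 powr p * (1 * indicator {-1..1} x) + C powr p * Q a 1 x)"
          using nn by simp
      qed
    qed
  qed
qed

end

theorem proposition4p1:
  fixes p s \<beta> :: real and u :: "real \<Rightarrow> real"
  assumes "1 \<le> p" and "0 < s" and "s < 1"
    and "max 0 (1/p - 2 * s) < \<beta>" and "\<beta> < 1/p"
    and "u = (\<lambda>x. (1 + x\<^sup>2) powr (-\<beta>/2))"
  shows "\<not> in_Lp p u
    \<and> (\<forall>x. \<forall>\<epsilon>>0. set_integrable lborel {y. \<epsilon> \<le> \<bar>x - y\<bar>}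
            (\<lambda>y. (u x - u y) / \<bar>x - y\<bar> powr (1 + 2 * s)))
    \<and> (\<forall>x. \<exists>L. (frac_trunc s u x \<longlongrightarrow> L) (at_right 0))
    \<and> (\<exists>C>0. \<forall>x. 1 \<le> \<bar>x\<bar> \<longrightarrow> \<bar>frac_lap s u x\<bar> \<le> C * \<bar>x\<bar> powr (-\<beta> - 2 * s))
    \<and> in_Lp p (frac_lap s u)"
proof -
  have b0: "0 < \<beta>" using assms(4) by simp
  have "1/p \<le> 1" using assms(1) by simp
  then have b1: "\<beta> < 1" using assms(5) by simp
  have L: "FL s \<beta>" by unfold_locales (use assms b0 b1 in auto)
  have ue: "FL.u \<beta> = u" by (simp add: fun_eq_iff FL.u_def[OF L] assms(6))
  show ?thesis using FL.main[OF L assms(1,4,5)] unfolding ue .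
qed
end
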